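(* Let $\mathcal{A}=(Q,\Sigma,t,o)$ be a synchronous automaton with finitely many states. If every state of $\mathcal{A}$ has at least two fixed points in $\Sigma^{\omega}$, then every state of $\mathcal{A}$ has infinitely many fixed points in $\Sigma^{\omega}$.
   Context: A synchronous automaton is a quadruple $(Q,\Sigma,t,o)$ with $Q$ a finite set of states, $\Sigma$ a finite alphabet, $t:Q\times\Sigma\to Q$ and $o:Q\times\Sigma\to\Sigma$. $\Sigma^\omega$ is the set of right-infinite words over $\Sigma$. A state $q_0$ acts on $\omega=\sigma_1\sigma_2\cdots\in\Sigma^\omega$ by $q_0(\omega)=o(q_0,\sigma_1)o(q_1,\sigma_2)o(q_2,\sigma_3)\cdots$ where $q_i=t(q_{i-1},\sigma_i)$. A fixed point of $q$ is an $\omega$ with $q(\omega)=\omega$. *)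

theory Defs
  imports Main
begin

text \<open>Right-infinite words over Sigma are functions nat => 's (letter sigma_(i+1) is w i).\<close>

primrec run_state :: "('q \<Rightarrow> 's \<Rightarrow> 'q) \<Rightarrow> 'q \<Rightarrow> (nat \<Rightarrow> 's) \<Rightarrow> nat \<Rightarrow> 'q" where
  "run_state t q w 0 = q"
| "run_state t q w (Suc n) = t (run_state t q w n) (w n)"

definition act :: "('q \<Rightarrow> 's \<Rightarrow> 'q) \<Rightarrow> ('q \<Rightarrow> 's \<Rightarrow> 's) \<Rightarrow> 'q \<Rightarrow> (nat \<Rightarrow> 's) \<Rightarrow> (nat \<Rightarrow> 's)" where
  "act t out q w = (\<lambda>n. out (run_state t q w n) (w n))"

definition fixed_points :: "('q \<Rightarrow> 's \<Rightarrow> 'q) \<Rightarrow> ('q \<Rightarrow> 's \<Rightarrow> 's) \<Rightarrow> 'q \<Rightarrow> (nat \<Rightarrow> 's) set" where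
  "fixed_points t out q = {w. act t out q w = w}"

end

theory Submission
  imports Defs
begin

lemma run_shift: "run_state t q w (m+k) = run_state t (run_state t q w m) (\<lambda>i. w (m+i)) k"
  by (induction k) auto

lemma run_prefix: "\<forall>i<n. w i = w' i \<Longrightarrow> k \<le> n \<Longrightarrow> run_state t q w k = run_state t q w' k"
  by (induction k) auto

lemma fp_iff: "w \<in> fixed_points t out q \<longleftrightarrow>
   (\<forall>i<m. out (run_state t q w i) (w i) = w i) \<and>
   (\<lambda>i. w (m+i)) \<in> fixed_points t out (run_state t q w m)"
proof -
  have "w \<in> fixed_points t out q \<longleftrightarrow> (\<forall>i. out (run_state t q w i) (w i) = w i)"
    unfolding fixed_points_def act_def by (auto simp: fun_eq_iff)
  also have "\<dots> \<longleftrightarrow> (\<forall>i<m. out (run_state t q w i) (w i) = w i) \<and>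
     (\<forall>k. out (run_state t q w (m+k)) (w (m+k)) = w (m+k))"
    apply safe
    apply simp
    apply simp
    by (metis le_add_diff_inverse not_less)
  also have "\<dots> \<longleftrightarrow> (\<forall>i<m. out (run_state t q w i) (w i) = w i) \<and>
   (\<lambda>i. w (m+i)) \<in> fixed_points t out (run_state t q w m)"
    by (simp add: fixed_points_def act_def fun_eq_iff run_shift[symmetric])
  finally show ?thesis .
qed

lemma step:
  assumes w1: "w1 \<in> fixed_points t out q" and w2: "w2 \<in> fixed_points t out q" and ne: "w1 \<noteq> w2"
  and IH: "\<exists>F. finite F \<and> card F \<ge> n \<and> F \<subseteq> fixed_points t out q'" 
  and q'def: "q' = t (run_state t q w1 (LEAST i. w1 i \<noteq> w2 i)) (w1 (LEAST i. w1 i \<noteq> w2 i))"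
  shows "\<exists>F. finite F \<and> card F \<ge> Suc n \<and> F \<subseteq> fixed_points t out q"
proof -
  define m where "m = (LEAST i. w1 i \<noteq> w2 i)"
  have ex: "\<exists>i. w1 i \<noteq> w2 i" using ne by auto
  have mne: "w1 m \<noteq> w2 m" unfolding m_def using LeastI_ex[OF ex] .
  have pre: "\<forall>i<m. w1 i = w2 i" unfolding m_def using not_less_Least by blast
  obtain F where F: "finite F" "card F \<ge> n" "F \<subseteq> fixed_points t out q'" using IH by blast
  define g where "g v = (\<lambda>i. if i < m then w1 i else if i = m then w1 m else v (i - Suc m))" for v :: "nat \<Rightarrow> _"
  have gpre: "\<forall>i<Suc m. g v i = w1 i" for v unfolding g_def by (auto simp: less_Suc_eq)
  have grun: "run_state t q (g v) k = run_state t q w1 k" if "k \<le> Suc m" for v k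
    by (rule run_prefix[OF gpre[of v] that])
  have gsuf: "(\<lambda>i. g v (Suc m + i)) = v" for v unfolding g_def by auto
  have gfp: "g v \<in> fixed_points t out q" if "v \<in> fixed_points t out q'" for v
  proof -
    have w1p: "\<forall>i<Suc m. out (run_state t q w1 i) (w1 i) = w1 i"
      using fp_iff[of w1 t out q "Suc m", THEN iffD1, OF w1] by (rule conjunct1)
    have c1: "\<forall>i<Suc m. out (run_state t q (g v) i) (g v i) = g v i"
    proof (intro allI impI)
      fix i assume i: "i < Suc m"
      have "run_state t q (g v) i = run_state t q w1 i" using i by (intro grun) simp
      moreover have "g v i = w1 i" using gpre i by blast
      ultimately show "out (run_state t q (g v) i) (g v i) = g v i" using w1p i by simp
    qed
    have r: "run_state t q (g v) (Suc m) = q'"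
      using grun[of "Suc m" v] unfolding q'def m_def[symmetric] by simp
    have c2: "(\<lambda>i. g v (Suc m + i)) \<in> fixed_points t out (run_state t q (g v) (Suc m))"
      unfolding gsuf r by (rule that)
    show ?thesis by (rule fp_iff[of "g v" t out q "Suc m", THEN iffD2]) (use c1 c2 in blast)
  qed
  have ginj: "inj g"
  proof (rule injI)
    fix x y assume "g x = g y"
    then have "(\<lambda>i. g x (Suc m+i)) = (\<lambda>i. g y (Suc m + i))" by simp
    then show "x = y" by (simp only: gsuf)
  qed
  have w2n: "w2 \<notin> g ` F" unfolding g_def using mne by auto
  let ?G = "insert w2 (g ` F)"
  have "card ?G = Suc (card (g ` F))" using w2n F(1) by simp
  also have "card (g ` F) = card F" using ginj by (simp add: card_image inj_on_subset)
  finally have "card ?G \<ge> Suc n" using F(2) by simp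
  moreover have "?G \<subseteq> fixed_points t out q" using w2 gfp F(3) by blast
  ultimately show ?thesis using F(1) by (intro exI[of _ ?G]) simp
qed

theorem mainTheorem3:
  fixes t :: "'q::finite \<Rightarrow> 's::finite \<Rightarrow> 'q" and out :: "'q \<Rightarrow> 's \<Rightarrow> 's"
  assumes "\<forall>q. \<exists>w1 w2. w1 \<noteq> w2 \<and> w1 \<in> fixed_points t out q \<and> w2 \<in> fixed_points t out q"
  shows "\<forall>q. infinite (fixed_points t out q)"
proof -
  have A: "\<forall>q. \<exists>F. finite F \<and> card F \<ge> n \<and> F \<subseteq> fixed_points t out q" for n
  proof (induction n)
    case 0 show ?case by (intro allI exI[of _ "{}"]) simp
  next
    case (Suc n)
    show ?case
    proof
      fix q
      obtain w1 w2 where h: "w1 \<noteq> w2" "w1 \<in> fixed_points t out q" "w2 \<in> fixed_points t out q"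
        using assms by blast
      show "\<exists>F. finite F \<and> card F \<ge> Suc n \<and> F \<subseteq> fixed_points t out q"
        by (rule step[OF h(2) h(3) h(1) Suc.IH[rule_format] refl])
    qed
  qed
  show ?thesis
  proof (intro allI notI)
    fix q assume fin: "finite (fixed_points t out q)"
    obtain F where "finite F" "card F \<ge> Suc (card (fixed_points t out q))" "F \<subseteq> fixed_points t out q"
      using A[of "Suc (card (fixed_points t out q))", rule_format, of q] by blast
    then have "card F \<le> card (fixed_points t out q)" using card_mono[OF fin] by blast
    then show False using \<open>card F \<ge> Suc (card (fixed_points t out q))\<close> by simp
  qed
qed

end
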